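(* Let $m,n\ge1$ and $\rho\in\mathfrak D(\mathcal H^{(m)}\otimes\mathcal H^{(n)})$. Then $$\mathtt p\big(\mathtt{AND}^{(m,n)}(\rho)\big)\le \mathtt p\big(Red^{(1)}_{[m,n]}(\rho)\big)\quad\text{and}\quad \mathtt p\big(\mathtt{AND}^{(m,n)}(\rho)\big)\le \mathtt p\big(Red^{(2)}_{[m,n]}(\rho)\big).$$
   Context: For $n\ge1$, $\mathcal H^{(n)}=(\mathbb C^2)^{\otimes n}$ with canonical basis $|x_1,\dots,x_n\rangle$, $x_i\in\{0,1\}$, $|0\rangle=(1,0)$, $|1\rangle=(0,1)$; $\mathcal H^{(m)}\otimes\mathcal H^{(n)}=\mathcal H^{(m+n)}$. $\mathfrak D(\mathcal H^{(n)})$ is the set of density operators on $\mathcal H^{(n)}$. $P_1^{(n)}$ (resp. $P_0^{(n)}$) is the projection onto the span of canonical basis vectors with last bit $x_n=1$ (resp. $0$), and $\mathtt p(\rho)=\mathrm{tr}(P_1^{(n)}\rho)$ for $\rho\in\mathfrak D(\mathcal H^{(n)})$. $Red^{(1)}_{[m,n]}(\rho)$ and $Red^{(2)}_{[m,n]}(\rho)$ are the reduced states (partial traces) of $\rho$ on the first factor $\mathcal H^{(m)}$ and on the second factor $\mathcal H^{(n)}$ respectively. The Toffoli gate $\mathtt T^{(m,n,1)}$ on $\mathcal H^{(m+n+1)}$ acts by $|x_1,\dots,x_m,y_1,\dots,y_n,z\rangle\mapsto|x_1,\dots,x_m,y_1,\dots,y_n\rangle\otimes|x_my_n\oplus z\rangle$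 ($\oplus$ = addition mod 2), and $\mathtt{AND}^{(m,n)}(\rho)=\mathtt T^{(m,n,1)}(\rho\otimes P_0^{(1)})\mathtt T^{(m,n,1)\dagger}$. *)

theory Defs
  imports Complex_Main "Jordan_Normal_Form.Matrix"
begin

(* Canonical basis vector |x_1,...,x_n> of H^(n) = (C^2)^{\<otimes>n} is indexed by
   the natural number with binary digits x_1 ... x_n (x_1 most significant).
   Hence H^(m) \<otimes> H^(n) = H^(m+n) corresponds to index (i,k) \<mapsto> i*2^n + k,
   and the last bit x_n is the index mod 2. *)

definition mtrace :: "complex mat \<Rightarrow> complex" where
  "mtrace A = (\<Sum>i<dim_row A. A $$ (i,i))"

definition cadj :: "complex mat \<Rightarrow> complex mat" where
  "cadj A = mat (dim_col A) (dim_row A) (\<lambda>(i,j). cnj (A $$ (j,i)))"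

definition density :: "nat \<Rightarrow> complex mat \<Rightarrow> bool" where
  "density n \<rho> \<longleftrightarrow> \<rho> \<in> carrier_mat (2^n) (2^n) \<and> cadj \<rho> = \<rho> \<and>
     (\<forall>v :: nat \<Rightarrow> complex.
        let q = (\<Sum>i<2^n. \<Sum>j<2^n. cnj (v i) * \<rho> $$ (i,j) * v j) in Im q = 0 \<and> Re q \<ge> 0) \<and>
     mtrace \<rho> = 1"

definition P1 :: "nat \<Rightarrow> complex mat" where
  "P1 n = mat (2^n) (2^n) (\<lambda>(i,j). if i = j \<and> odd i then 1 else 0)"

definition P0 :: "nat \<Rightarrow> complex mat" where
  "P0 n = mat (2^n) (2^n) (\<lambda>(i,j). if i = j \<and> even i then 1 else 0)"

definition prob1 :: "nat \<Rightarrow> complex mat \<Rightarrow> real" where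
  "prob1 n \<rho> = Re (mtrace (P1 n * \<rho>))"

definition tensor :: "nat \<Rightarrow> nat \<Rightarrow> complex mat \<Rightarrow> complex mat \<Rightarrow> complex mat" where
  "tensor a b A B = mat (2^(a+b)) (2^(a+b))
     (\<lambda>(i,j). A $$ (i div 2^b, j div 2^b) * B $$ (i mod 2^b, j mod 2^b))"

definition Red1 :: "nat \<Rightarrow> nat \<Rightarrow> complex mat \<Rightarrow> complex mat" where
  "Red1 m n \<rho> = mat (2^m) (2^m) (\<lambda>(i,j). \<Sum>k<2^n. \<rho> $$ (i * 2^n + k, j * 2^n + k))"

definition Red2 :: "nat \<Rightarrow> nat \<Rightarrow> complex mat \<Rightarrow> complex mat" where
  "Red2 m n \<rho> = mat (2^n) (2^n) (\<lambda>(i,j). \<Sum>k<2^m. \<rho> $$ (k * 2^n + i, k * 2^n + j))"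

(* action of the Toffoli gate T^(m,n,1) on basis indices of H^(m+n+1):
   index = (ix * 2^n + iy) * 2 + z; x_m = ix mod 2, y_n = iy mod 2 *)
definition toffoli_idx :: "nat \<Rightarrow> nat \<Rightarrow> nat \<Rightarrow> nat" where
  "toffoli_idx m n t =
     (let z = t mod 2; iy = (t div 2) mod 2^n; ix = t div 2^(n+1);
          z' = (if odd ix \<and> odd iy then 1 - z else z)
      in (ix * 2^n + iy) * 2 + z')"

definition toffoli :: "nat \<Rightarrow> nat \<Rightarrow> complex mat" where
  "toffoli m n = mat (2^(m+n+1)) (2^(m+n+1))
     (\<lambda>(i,j). if i = toffoli_idx m n j then 1 else 0)"

definition AND_gate :: "nat \<Rightarrow> nat \<Rightarrow> complex mat \<Rightarrow> complex mat" where
  "AND_gate m n \<rho> = toffoli m n * tensor (m+n) 1 \<rho> (P0 1) * cadj (toffoli m n)"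

end

theory Submission
  imports Defs
begin

lemma sum_add_split: "(\<Sum>t<x+(b::nat). f t) = (\<Sum>t<x. f t) + (\<Sum>k<b. f (x+k))"
  by (induction b) (auto simp: add.assoc)

lemma sum_pair: "(\<Sum>t<(a::nat)*b. f t) = (\<Sum>i<a. \<Sum>k<b. f (i*b+k))"
proof (induction a)
  case (Suc a) then show ?case
    by (simp add: sum_add_split add.commute[of b "a*b"] mult.commute[of b])
qed simp

lemma sum_even_odd: "(\<Sum>t<2*(M::nat). (g t :: 'a::comm_monoid_add)) = (\<Sum>t<M. g (2*t) + g (2*t+1))"
  by (induction M) (auto simp: sum_add_split[where b=2, simplified] numeral_2_eq_2 add.assoc)

lemma mult_entry:
  assumes "A \<in> carrier_mat nr K" "B \<in> carrier_mat K nc" "i < nr" "j < nc"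
  shows "(A * B) $$ (i,j) = (\<Sum>k<K. A $$ (i,k) * B $$ (k,j))"
  using assms by (auto simp: scalar_prod_def atLeast0LessThan intro!: sum.cong)

lemma tof_even:
  "toffoli_idx m n (2*t) = 2*t + (if odd (t div 2^n) \<and> odd (t mod 2^n) then 1 else 0)"
proof -
  have a: "(2*t) div 2 mod 2^n = t mod 2^n" by simp
  have b: "2*t div 2^(n+1) = t div 2^n"
    by (simp add: div_mult2_eq)
  have c: "(t div 2^n) * 2^n + t mod 2^n = t" by (rule div_mult_mod_eq)
  show ?thesis unfolding toffoli_idx_def Let_def a b c by simp
qed

lemma diag_nonneg:
  assumes "density k \<rho>" "t < 2^k"
  shows "Re (\<rho> $$ (t,t)) \<ge> 0"
proof -
  let ?v = "\<lambda>i::nat. if i = t then (1::complex) else 0"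
  from assms(1) have "\<forall>v :: nat \<Rightarrow> complex. let q = (\<Sum>i<2^k. \<Sum>j<2^k. cnj (v i) * \<rho> $$ (i,j) * v j) in Im q = 0 \<and> Re q \<ge> 0"
    unfolding density_def by blast
  from spec[OF this, of ?v] have "let q = (\<Sum>i<2^k. \<Sum>j<2^k. cnj (?v i) * \<rho> $$ (i,j) * ?v j) in Im q = 0 \<and> Re q \<ge> 0" .
  moreover have "(\<Sum>i<(2::nat)^k. \<Sum>j<(2::nat)^k. cnj (?v i) * \<rho> $$ (i,j) * ?v j) = \<rho> $$ (t,t)"
  proof -
    have "\<And>i j. cnj (?v i) * \<rho> $$ (i,j) * ?v j = (if i = t then (if j = t then \<rho> $$ (i,j) else 0) else 0)"
      by simp
    then have "(\<Sum>i<(2::nat)^k. \<Sum>j<(2::nat)^k. cnj (?v i) * \<rho> $$ (i,j) * ?v j)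
       = (\<Sum>i<(2::nat)^k. if i = t then \<rho> $$ (t,t) else 0)"
      using assms(2) by (intro sum.cong refl) (auto simp: if_distrib cong: if_cong)
    then show ?thesis using assms(2) by simp
  qed
  ultimately show ?thesis by (simp add: Let_def)
qed

lemma P1_diag:
  assumes "R \<in> carrier_mat (2^k) (2^k)" "i < 2^k"
  shows "(P1 k * R) $$ (i,i) = (if odd i then R $$ (i,i) else 0)"
proof -
  have P1c: "P1 k \<in> carrier_mat (2^k) (2^k)" unfolding P1_def by simp
  have "(P1 k * R) $$ (i,i) = (\<Sum>l<2^k. P1 k $$ (i,l) * R $$ (l,i))"
    by (rule mult_entry[OF P1c assms(1) assms(2) assms(2)])
  also have "\<dots> = (\<Sum>l<2^k. if l = i then (if odd i then R $$ (l,i) else 0) else 0)"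
    using assms(2) by (intro sum.cong refl) (auto simp: P1_def)
  finally show ?thesis using assms(2) by simp
qed

theorem theorem3p10:
  fixes m n :: nat and \<rho> :: "complex mat"
  assumes "m \<ge> 1" and "n \<ge> 1" and "density (m+n) \<rho>"
  shows "prob1 (m+n+1) (AND_gate m n \<rho>) \<le> prob1 m (Red1 m n \<rho>) \<and>
         prob1 (m+n+1) (AND_gate m n \<rho>) \<le> prob1 n (Red2 m n \<rho>)"
proof -
  define M where "M = (2::nat)^(m+n)"
  define N where "N = (2::nat)^(m+n+1)"
  have NM: "N = 2*M" unfolding N_def M_def by simp
  define T where "T = toffoli m n"
  define A where "A = tensor (m+n) 1 \<rho> (P0 1)"
  define \<tau> where "\<tau> = toffoli_idx m n"
  define d where "d = (\<lambda>t. \<rho> $$ (t,t))"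
  have T: "T \<in> carrier_mat N N" unfolding T_def toffoli_def N_def by simp
  have A: "A \<in> carrier_mat N N" unfolding A_def tensor_def N_def by simp
  have cT: "cadj T \<in> carrier_mat N N" using T unfolding cadj_def by auto
  have Tij: "T $$ (i,j) = (if i = \<tau> j then 1 else 0)" if "i < N" "j < N" for i j
    using that unfolding T_def toffoli_def \<tau>_def N_def by simp
  have cTij: "cadj T $$ (k,i) = (if i = \<tau> k then 1 else 0)" if "i < N" "k < N" for i k
    using that T Tij unfolding cadj_def by auto
  have Ajk: "A $$ (j,k) = (if even j \<and> even k then \<rho> $$ (j div 2, k div 2) else 0)"
    if "j < N" "k < N" for j k
  proof -
    have "A $$ (j,k) = \<rho> $$ (j div 2, k div 2) * P0 1 $$ (j mod 2, k mod 2)"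
      using that unfolding A_def tensor_def N_def by simp
    also have "P0 1 $$ (j mod 2, k mod 2) = (if j mod 2 = k mod 2 \<and> even (j mod 2) then 1 else 0)"
      unfolding P0_def by simp
    finally show ?thesis
      by (cases "even j"; cases "even k"; auto simp: even_iff_mod_2_eq_zero odd_iff_mod_2_eq_one)
  qed
  have c: "\<tau> (2*s) = 2*s + (if odd (s div 2^n) \<and> odd (s mod 2^n) then 1 else 0)" for s
    unfolding \<tau>_def by (rule tof_even)
  have TA: "T * A \<in> carrier_mat N N" using T A by simp
  have ANDc: "AND_gate m n \<rho> \<in> carrier_mat N N"
    unfolding AND_gate_def T_def[symmetric] A_def[symmetric] using T A cT by simp
  have ANDii: "AND_gate m n \<rho> $$ (i,i) =
     (\<Sum>k<N. \<Sum>j<N. (if i = \<tau> j then 1 else 0) * A $$ (j,k) * (if i = \<tau> k then 1 else 0))"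
    if "i < N" for i
  proof -
    have "AND_gate m n \<rho> $$ (i,i) = (\<Sum>k<N. (T*A) $$ (i,k) * cadj T $$ (k,i))"
      unfolding AND_gate_def T_def[symmetric] A_def[symmetric]
      by (rule mult_entry[OF TA cT that that])
    also have "\<dots> = (\<Sum>k<N. (\<Sum>j<N. T $$ (i,j) * A $$ (j,k)) * (if i = \<tau> k then 1 else 0))"
      using that by (intro sum.cong refl) (simp add: mult_entry[OF T A] cTij)
    also have "\<dots> = (\<Sum>k<N. \<Sum>j<N. (if i = \<tau> j then 1 else 0) * A $$ (j,k) * (if i = \<tau> k then 1 else 0))"
      using that by (intro sum.cong refl) (simp add: sum_distrib_right Tij)
    finally show ?thesis .
  qed
  have Fodd: "AND_gate m n \<rho> $$ (2*s+1,2*s+1) = (if odd (s div 2^n) \<and> odd (s mod 2^n) then d s else 0)"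
    if "s < M" for s
  proof -
    have sN: "2*s+1 < N" "2*s < N" using that NM by auto
    have trm: "(if 2*s+1 = \<tau> j then 1 else 0) * A $$ (j,k) * (if 2*s+1 = \<tau> k then 1 else 0)
       = (if j = 2*s then (if k = 2*s then (if odd (s div 2^n) \<and> odd (s mod 2^n) then d s else 0) else 0) else 0)"
      if "j < N" "k < N" for j k
    proof (cases "even j \<and> even k")
      case True
      then obtain j' k' where jk: "j = 2*j'" "k = 2*k'" by (auto elim!: evenE)
      have e: "(2*s+1 = \<tau> (2*x)) = (x = s \<and> odd (s div 2^n) \<and> odd (s mod 2^n))" for x
              proof (cases "odd (x div 2^n) \<and> odd (x mod 2^n)")
        case True then show ?thesis unfolding c by auto
      next
        case False
        have "2*s+1 \<noteq> 2*x" by presburger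
        then show ?thesis unfolding c using False by auto
      qed
      have A': "A $$ (j,k) = \<rho> $$ (j', k')" using Ajk[OF that] jk by simp
      show ?thesis unfolding A' unfolding jk e d_def by auto
    next
      case False
      then have "A $$ (j,k) = 0" using Ajk[OF that] by auto
      then show ?thesis using False by auto
    qed
    show ?thesis
      unfolding ANDii[OF sN(1)]
    proof -
      have "(\<Sum>k<N. \<Sum>j<N. (if 2*s+1 = \<tau> j then 1 else 0) * A $$ (j,k) * (if 2*s+1 = \<tau> k then 1 else 0))
        = (\<Sum>k<N. \<Sum>j<N. (if j = 2*s then (if k = 2*s then (if odd (s div 2^n) \<and> odd (s mod 2^n) then d s else 0) else 0) else 0))"
        by (intro sum.cong refl trm) auto
      also have "\<dots> = (if odd (s div 2^n) \<and> odd (s mod 2^n) then d s else 0)"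
        using sN by (simp add: sum.delta)
      finally show "(\<Sum>k<N. \<Sum>j<N. (if 2*s+1 = \<tau> j then 1 else 0) * A $$ (j,k) * (if 2*s+1 = \<tau> k then 1 else 0))
        = (if odd (s div 2^n) \<and> odd (s mod 2^n) then d s else 0)" .
    qed
  qed
  have ANDeven: "(if odd (2*s) then AND_gate m n \<rho> $$ (2*s,2*s) else 0) = 0" for s by simp
  have P_AND: "prob1 (m+n+1) (AND_gate m n \<rho>) =
      (\<Sum>s<M. Re (if odd (s div 2^n) \<and> odd (s mod 2^n) then d s else 0))"
  proof -
    have "mtrace (P1 (m+n+1) * AND_gate m n \<rho>) = (\<Sum>i<N. (P1 (m+n+1) * AND_gate m n \<rho>) $$ (i,i))"
      unfolding mtrace_def P1_def N_def by simp
    also have "\<dots> = (\<Sum>i<N. if odd i then AND_gate m n \<rho> $$ (i,i) else 0)"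
    proof (intro sum.cong refl)
      fix i assume "i \<in> {..<N}"
      then have i: "i < N" by simp
      have P1c: "P1 (m+n+1) \<in> carrier_mat N N" unfolding P1_def N_def by simp
      have "(P1 (m+n+1) * AND_gate m n \<rho>) $$ (i,i) = (\<Sum>l<N. P1 (m+n+1) $$ (i,l) * AND_gate m n \<rho> $$ (l,i))"
        by (rule mult_entry[OF P1c ANDc i i])
      also have "\<dots> = (\<Sum>l<N. if l = i then (if odd i then AND_gate m n \<rho> $$ (l,i) else 0) else 0)"
        using i unfolding N_def by (intro sum.cong refl) (auto simp: P1_def)
      finally show "(P1 (m+n+1) * AND_gate m n \<rho>) $$ (i,i) = (if odd i then AND_gate m n \<rho> $$ (i,i) else 0)"
        using i by simp
    qed
    also have "\<dots> = (\<Sum>s<M. if odd (s div 2^n) \<and> odd (s mod 2^n) then d s else 0)"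
      unfolding NM sum_even_odd using Fodd by (intro sum.cong refl) auto
    finally show ?thesis unfolding prob1_def by (simp add: Re_sum)
  qed
  have M2: "M = 2^m * 2^n" unfolding M_def by (simp add: power_add)
  have P_R1: "prob1 m (Red1 m n \<rho>) = (\<Sum>s<M. Re (if odd (s div 2^n) then d s else 0))"
  proof -
    have Rc: "Red1 m n \<rho> \<in> carrier_mat (2^m) (2^m)" unfolding Red1_def by simp
    have "mtrace (P1 m * Red1 m n \<rho>) = (\<Sum>i<2^m. (P1 m * Red1 m n \<rho>) $$ (i,i))"
      unfolding mtrace_def P1_def by simp
    also have "\<dots> = (\<Sum>i<2^m. \<Sum>k<2^n. if odd ((i*2^n+k) div 2^n) then d (i*2^n+k) else 0)"
      by (intro sum.cong refl) (simp add: P1_diag[OF Rc], simp add: Red1_def d_def)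
    also have "\<dots> = (\<Sum>s<M. if odd (s div 2^n) then d s else 0)"
      unfolding M2 sum_pair ..
    finally show ?thesis unfolding prob1_def by (simp add: Re_sum)
  qed
  have P_R2: "prob1 n (Red2 m n \<rho>) = (\<Sum>s<M. Re (if odd (s mod 2^n) then d s else 0))"
  proof -
    have Rc: "Red2 m n \<rho> \<in> carrier_mat (2^n) (2^n)" unfolding Red2_def by simp
    have "mtrace (P1 n * Red2 m n \<rho>) = (\<Sum>i<2^n. (P1 n * Red2 m n \<rho>) $$ (i,i))"
      unfolding mtrace_def P1_def by simp
    also have "\<dots> = (\<Sum>i<2^n. \<Sum>k<2^m. if odd ((k*2^n+i) mod 2^n) then d (k*2^n+i) else 0)"
      by (intro sum.cong refl) (simp add: P1_diag[OF Rc], simp add: Red2_def d_def)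
    also have "\<dots> = (\<Sum>k<2^m. \<Sum>i<2^n. if odd ((k*2^n+i) mod 2^n) then d (k*2^n+i) else 0)"
      by (rule sum.swap)
    also have "\<dots> = (\<Sum>s<M. if odd (s mod 2^n) then d s else 0)"
      unfolding M2 sum_pair ..
    finally show ?thesis unfolding prob1_def by (simp add: Re_sum)
  qed
  have dn: "Re (d s) \<ge> 0" if "s < M" for s
    unfolding d_def using diag_nonneg[OF assms(3)] that M_def by simp
  show ?thesis unfolding P_AND P_R1 P_R2
    by (intro conjI sum_mono) (auto simp: dn)
qed
end
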